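(* Let $(\Lambda,Y)$ be an extensible graph with parameters $(t,s,\bar s)$ with $t=1$, let $y\in Y$, $Y_1=\Lambda(y,1)$, $Y_2=\Lambda(y,2)$, and $\Lambda_1,\Lambda_2$ the graphs induced by $\Lambda$ on $Y_1,Y_2$. Then: (1) The edges of $\Lambda_1$ form a partition of $Y_1$ into $s$ edges $\alpha_1=\{a'_1,a''_1\},\dots,\alpha_s=\{a'_s,a''_s\}$. (2) Letting $A'_i$ (resp. $A''_i$) be the set of points of $Y_2$ adjacent to $a'_i$ (resp. $a''_i$), for each $i$ the pair $\{A'_i,A''_i\}$ is a partition of $Y_2$ into two subsets of cardinality $\bar s=2(s-1)$. (3) $\Lambda_2$ contains no triangle. (4) Every edge of $\Lambda_2$ is contained in exactly one of the sets $A'_1,A''_1,\dots,A'_s,A''_s$, and the edges of $\Lambda_2$ contained in each of these sets form a partition of it into $s-1$ edges. (5) If $\alpha'$ and $\alpha''$ are edges of $\Lambda_2$ contained in $A'_i$ and $A''_i$ respectively, there exist uniquely determined edges $\beta',\beta''$ of $\Lambda_2$ such that $\alpha',\alpha'',\beta',\beta''$ form a square (a $4$-cycle); moreover there is a unique index $j$ such that one of $\beta',\beta''$ is contained in $A'_j$ and the other in $A''_j$.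
   Context: A finite simple graph $(\Lambda,Y)$ is extensible with parameters $(t,s,\bar s)$ (nonnegative integers) if: (1) $\Lambda$ has diameter $2$; (2) for every $y\in Y$, with $\Lambda(y,d)$ the set of vertices at distance $d$ from $y$: (a) $|\Lambda(y,1)|=2s$; (b) $|\Lambda(y,2)|=2\bar s$; (c) every $z\in\Lambda(y,1)$ is adjacent to exactly $\bar s$ points of $\Lambda(y,2)$ and exactly $t=2s-\bar s-1$ points of $\Lambda(y,1)$; (d) every $z\in\Lambda(y,2)$ is adjacent to exactly $s$ points of $\Lambda(y,2)$ and exactly $s$ points of $\Lambda(y,1)$; (3) every edge lies in exactly $t$ triangles; (4) $|Y|=1+2s+2\bar s$. *)

theory Defs
  imports Main
begin

definition simple_graph :: "'a set \<Rightarrow> ('a \<Rightarrow> 'a \<Rightarrow> bool) \<Rightarrow> bool" where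
  "simple_graph Y E \<longleftrightarrow> finite Y \<and> (\<forall>u v. E u v \<longrightarrow> u \<in> Y \<and> v \<in> Y)
     \<and> (\<forall>u v. E u v \<longrightarrow> E v u) \<and> (\<forall>u. \<not> E u u)"

definition sphere1 :: "'a set \<Rightarrow> ('a \<Rightarrow> 'a \<Rightarrow> bool) \<Rightarrow> 'a \<Rightarrow> 'a set" where
  "sphere1 Y E y = {z \<in> Y. E y z}"

definition sphere2 :: "'a set \<Rightarrow> ('a \<Rightarrow> 'a \<Rightarrow> bool) \<Rightarrow> 'a \<Rightarrow> 'a set" where
  "sphere2 Y E y = {z \<in> Y. z \<noteq> y \<and> \<not> E y z \<and> (\<exists>w \<in> Y. E y w \<and> E w z)}"

definition diameter2 :: "'a set \<Rightarrow> ('a \<Rightarrow> 'a \<Rightarrow> bool) \<Rightarrow> bool" where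
  "diameter2 Y E \<longleftrightarrow>
     (\<forall>x \<in> Y. \<forall>z \<in> Y. x = z \<or> E x z \<or> (\<exists>w \<in> Y. E x w \<and> E w z))
     \<and> (\<exists>x \<in> Y. \<exists>z \<in> Y. x \<noteq> z \<and> \<not> E x z)"

definition extensible :: "'a set \<Rightarrow> ('a \<Rightarrow> 'a \<Rightarrow> bool) \<Rightarrow> nat \<Rightarrow> nat \<Rightarrow> nat \<Rightarrow> bool" where
  "extensible Y E t s sbar \<longleftrightarrow>
     simple_graph Y E \<and>
     int t = 2 * int s - int sbar - 1 \<and>
     diameter2 Y E \<and>
     (\<forall>y \<in> Y.
        card (sphere1 Y E y) = 2 * s \<and>
        card (sphere2 Y E y) = 2 * sbar \<and>
        (\<forall>z \<in> sphere1 Y E y.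
           card {w \<in> sphere2 Y E y. E z w} = sbar \<and>
           card {w \<in> sphere1 Y E y. E z w} = t) \<and>
        (\<forall>z \<in> sphere2 Y E y.
           card {w \<in> sphere2 Y E y. E z w} = s \<and>
           card {w \<in> sphere1 Y E y. E z w} = s)) \<and>
     (\<forall>u \<in> Y. \<forall>v \<in> Y. E u v \<longrightarrow> card {w \<in> Y. E u w \<and> E v w} = t) \<and>
     card Y = 1 + 2 * s + 2 * sbar"

definition induced_edges :: "('a \<Rightarrow> 'a \<Rightarrow> bool) \<Rightarrow> 'a set \<Rightarrow> 'a set set" where
  "induced_edges E S = {{u, v} | u v. u \<in> S \<and> v \<in> S \<and> E u v}"

definition is_partition :: "'a set set \<Rightarrow> 'a set \<Rightarrow> bool" where
  "is_partition P S \<longleftrightarrow> \<Union>P = S \<and> {} \<notin> P \<and> (\<forall>e \<in> P. \<forall>f \<in> P. e \<noteq> f \<longrightarrow> e \<inter> f = {})"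

definition is_square :: "'a set set \<Rightarrow> bool" where
  "is_square Q \<longleftrightarrow> card Q = 4 \<and> (\<forall>e \<in> Q. card e = 2) \<and> card (\<Union>Q) = 4
     \<and> (\<forall>v \<in> \<Union>Q. card {e \<in> Q. v \<in> e} = 2)"

end

theory Submission
  imports Defs
begin


lemma sq_of:
  assumes d: "u1 \<noteq> u2" "v1 \<noteq> v2" "u1 \<noteq> v1" "u1 \<noteq> v2" "u2 \<noteq> v1" "u2 \<noteq> v2"
  shows "is_square {{u1,u2},{v1,v2},{u1,v1},{u2,v2}}"
proof -
  let ?Q = "{{u1,u2},{v1,v2},{u1,v1},{u2,v2}}"
  have U: "\<Union>?Q = {u1,u2,v1,v2}" by blast
  have c4: "card ?Q = 4" using d by (simp add: doubleton_eq_iff)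
  have ce: "\<forall>e\<in>?Q. card e = 2" using d by auto
  have cU: "card (\<Union>?Q) = 4" unfolding U using d by simp
  have f1: "{e \<in> ?Q. u1 \<in> e} = {{u1,u2},{u1,v1}}" using d by auto
  have f2: "{e \<in> ?Q. u2 \<in> e} = {{u1,u2},{u2,v2}}" using d by auto
  have f3: "{e \<in> ?Q. v1 \<in> e} = {{v1,v2},{u1,v1}}" using d by auto
  have f4: "{e \<in> ?Q. v2 \<in> e} = {{v1,v2},{u2,v2}}" using d by auto
  have cv: "\<forall>v \<in> \<Union>?Q. card {e \<in> ?Q. v \<in> e} = 2"
    unfolding U using d f1 f2 f3 f4 by (auto simp: doubleton_eq_iff)
  show ?thesis unfolding is_square_def using c4 ce cU cv by blast
qed

lemma sq_char:
  assumes d: "u1 \<noteq> u2" "v1 \<noteq> v2" "u1 \<noteq> v1" "u1 \<noteq> v2" "u2 \<noteq> v1" "u2 \<noteq> v2"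
    and cB: "card B = 2" and sq: "is_square ({{u1,u2},{v1,v2}} \<union> B)"
  shows "B = {{u1,v1},{u2,v2}} \<or> B = {{u1,v2},{u2,v1}}"
proof -
  let ?a1 = "{u1,u2}" and ?a2 = "{v1,v2}"
  let ?Q = "{?a1,?a2} \<union> B"
  let ?V = "{u1,u2,v1,v2}"
  obtain b1 b2 where B: "B = {b1,b2}" "b1 \<noteq> b2" using cB card_2_iff by metis
  have cQ: "card ?Q = 4" using sq unfolding is_square_def by blast
  have ce: "\<And>e. e \<in> ?Q \<Longrightarrow> card e = 2" using sq unfolding is_square_def by blast
  have cU: "card (\<Union>?Q) = 4" using sq unfolding is_square_def by blast
  have cv: "\<And>v. v \<in> \<Union>?Q \<Longrightarrow> card {e \<in> ?Q. v \<in> e} = 2" using sq unfolding is_square_def by blast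
  have a12: "?a1 \<noteq> ?a2" using d by (auto simp: doubleton_eq_iff)
  have le3: "card {x, y, z} \<le> 3" for x y z :: "'a set" by (auto simp: card_insert_if)
  have nb: "b \<noteq> ?a1 \<and> b \<noteq> ?a2" if "b \<in> B" for b
  proof (rule ccontr)
    assume "\<not> (b \<noteq> ?a1 \<and> b \<noteq> ?a2)"
    then have "?Q = {?a1, ?a2, b1} \<or> ?Q = {?a1,?a2,b2}" using that B by auto
    then have "card ?Q \<le> 3" using le3 by metis
    then show False using cQ by simp
  qed
  have finU: "finite (\<Union>?Q)" by (rule card_ge_0_finite) (unfold cU, simp)
  have VU: "?V \<subseteq> \<Union>?Q" by blast
  have cV: "card ?V = 4" using d by simp
  have UV: "\<Union>?Q = ?V" using card_subset_eq[OF finU VU] cU cV by simp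
  have cross: "b \<in> {{u1,v1},{u1,v2},{u2,v1},{u2,v2}}" if "b \<in> B" for b
  proof -
    have "card b = 2" using ce that by blast
    then obtain p q where pq: "b = {p,q}" "p \<noteq> q" using card_2_iff by metis
    have "b \<subseteq> ?V" using that UV by blast
    then have "p \<in> ?V" "q \<in> ?V" using pq by auto
    then have "p = u1 \<or> p = u2 \<or> p = v1 \<or> p = v2" "q = u1 \<or> q = u2 \<or> q = v1 \<or> q = v2" by simp_all
    then show ?thesis using nb[OF that] pq d by (elim disjE) (simp_all add: doubleton_eq_iff)
  qed
  have one: "card {e \<in> B. v \<in> e} = 1" if "v \<in> ?V" for v
  proof -
    have spl: "{e \<in> ?Q. v \<in> e} = {e \<in> {?a1,?a2}. v \<in> e} \<union> {e \<in> B. v \<in> e}" by blast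
    have dj: "{e \<in> {?a1,?a2}. v \<in> e} \<inter> {e \<in> B. v \<in> e} = {}" using nb by blast
    have "v \<in> ?a1 \<and> v \<notin> ?a2 \<or> v \<notin> ?a1 \<and> v \<in> ?a2" using that d by blast
    then have "{e \<in> {?a1,?a2}. v \<in> e} = {?a1} \<or> {e \<in> {?a1,?a2}. v \<in> e} = {?a2}"
      by blast
    then have c1: "card {e \<in> {?a1,?a2}. v \<in> e} = 1" by (elim disjE) simp_all
    have "v \<in> \<Union>?Q" using that UV by simp
    then have "card {e \<in> ?Q. v \<in> e} = 2" by (rule cv)
    then have "card ({e \<in> {?a1,?a2}. v \<in> e} \<union> {e \<in> B. v \<in> e}) = 2" unfolding spl .
    moreover have "card ({e \<in> {?a1,?a2}. v \<in> e} \<union> {e \<in> B. v \<in> e}) = card {e \<in> {?a1,?a2}. v \<in> e} + card {e \<in> B. v \<in> e}"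
      by (rule card_Un_disjoint[OF _ _ dj]) (simp_all add: B)
    ultimately show ?thesis using c1 by simp
  qed
  have ex: "(v \<in> b1) = (v \<notin> b2)" if "v \<in> ?V" for v
  proof -
    have c: "card {e \<in> {b1,b2}. v \<in> e} = 1" using one[OF that] B by simp
    show ?thesis
    proof (cases "v \<in> b1")
      case True
      show ?thesis
      proof (cases "v \<in> b2")
        case True2: True
        then have "{e \<in> {b1,b2}. v \<in> e} = {b1,b2}" using True by auto
        then have "card {e \<in> {b1,b2}. v \<in> e} = 2" using B by simp
        then show ?thesis using c by linarith
      qed (use True in auto)
    next
      case False
      show ?thesis
      proof (cases "v \<in> b2")
        case False2: False
        then have "{e \<in> {b1,b2}. v \<in> e} = {}" using False by auto
        then have "card {e \<in> {b1,b2}. v \<in> e} = 0" by (simp only: card.empty)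
        then show ?thesis using c by linarith
      qed (use False in auto)
    qed
  qed
  have b1: "b1 \<in> {{u1,v1},{u1,v2},{u2,v1},{u2,v2}}" using cross B by blast
  have b2: "b2 \<in> {{u1,v1},{u1,v2},{u2,v1},{u2,v2}}" using cross B by blast
  have e1: "(u1 \<in> b1) = (u1 \<notin> b2)" "(u2 \<in> b1) = (u2 \<notin> b2)"
     "(v1 \<in> b1) = (v1 \<notin> b2)" "(v2 \<in> b1) = (v2 \<notin> b2)" using ex by auto
  from b1 have "b1 = {u1,v1} \<or> b1 = {u1,v2} \<or> b1 = {u2,v1} \<or> b1 = {u2,v2}" by simp
  moreover from b2 have "b2 = {u1,v1} \<or> b2 = {u1,v2} \<or> b2 = {u2,v1} \<or> b2 = {u2,v2}" by simp
  ultimately show ?thesis using e1 d unfolding B(1) by (elim disjE) (simp_all add: doubleton_eq_iff)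
qed




lemma matching_partition:
  assumes fin: "finite S" and sym: "\<And>u v. E u v \<Longrightarrow> E v u" and irr: "\<And>u. \<not> E u u"
    and uq: "\<And>w. w \<in> S \<Longrightarrow> \<exists>!w'. w' \<in> S \<and> E w w'"
  shows "is_partition (induced_edges E S) S \<and> 2 * card (induced_edges E S) = card S"
proof -
  define nb where "nb w = (THE w'. w' \<in> S \<and> E w w')" for w
  have nb: "nb w \<in> S \<and> E w (nb w)" if "w \<in> S" for w
    unfolding nb_def using theI'[OF uq[OF that]] .
  have nbu: "w' = nb w" if "w \<in> S" "w' \<in> S" "E w w'" for w w'
    using uq[OF that(1)] nb[OF that(1)] that by blast
  let ?I = "induced_edges E S"
  have eform: "e = {x, nb x}" if "e \<in> ?I" "x \<in> e" for e x
  proof -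
    from that(1) obtain u v where e: "e = {u,v}" "u \<in> S" "v \<in> S" "E u v" unfolding induced_edges_def by blast
    show ?thesis
    proof (cases "x = u")
      case True then show ?thesis using e nbu by blast
    next
      case False then have "x = v" using that(2) e by blast
      then show ?thesis using e nbu sym by blast
    qed
  qed
  have sub: "?I \<subseteq> Pow S" unfolding induced_edges_def by blast
  have finI: "finite ?I" using finite_subset[OF sub] fin by blast
  have un: "\<Union>?I = S"
  proof
    show "\<Union>?I \<subseteq> S" using sub by blast
    show "S \<subseteq> \<Union>?I"
    proof
      fix w assume "w \<in> S"
      then have "{w, nb w} \<in> ?I" using nb unfolding induced_edges_def by blast
      then show "w \<in> \<Union>?I" by blast
    qed
  qed
  have ne: "{} \<notin> ?I" unfolding induced_edges_def by blast
  have dj: "\<forall>e\<in>?I. \<forall>f\<in>?I. e \<noteq> f \<longrightarrow> e \<inter> f = {}"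
    using eform by blast
  have c2: "card e = 2" if "e \<in> ?I" for e
  proof -
    from that obtain u v where "e = {u,v}" "E u v" unfolding induced_edges_def by blast
    moreover have "u \<noteq> v" using irr calculation by metis
    ultimately show ?thesis by simp
  qed
  have "card (\<Union>?I) = sum card ?I"
    apply (rule card_Union_disjoint)
    using dj unfolding pairwise_def disjnt_def apply blast
    using sub fin finite_subset by blast
  also have "\<dots> = 2 * card ?I" using c2 by simp
  finally show ?thesis using un ne dj unfolding is_partition_def by simp
qed

locale X =
  fixes Y :: "'a set" and E :: "'a \<Rightarrow> 'a \<Rightarrow> bool" and s sbar :: nat and y :: 'a
  assumes ext: "extensible Y E 1 s sbar" and yY: "y \<in> Y"
begin

abbreviation "Y1 \<equiv> sphere1 Y E y"
abbreviation "Y2 \<equiv> sphere2 Y E y"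
abbreviation "AA a \<equiv> {z \<in> sphere2 Y E y. E a z}"

lemma extE:
  obtains "simple_graph Y E" "int 1 = 2 * int s - int sbar - 1" "diameter2 Y E"
   "\<forall>y \<in> Y.
        card (sphere1 Y E y) = 2 * s \<and>
        card (sphere2 Y E y) = 2 * sbar \<and>
        (\<forall>z \<in> sphere1 Y E y.
           card {w \<in> sphere2 Y E y. E z w} = sbar \<and>
           card {w \<in> sphere1 Y E y. E z w} = 1) \<and>
        (\<forall>z \<in> sphere2 Y E y.
           card {w \<in> sphere2 Y E y. E z w} = s \<and>
           card {w \<in> sphere1 Y E y. E z w} = s)"
   "\<forall>u \<in> Y. \<forall>v \<in> Y. E u v \<longrightarrow> card {w \<in> Y. E u w \<and> E v w} = 1"
  apply (insert ext[unfolded extensible_def])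
  apply (elim conjE)
  apply (rule that)
  apply assumption+
  done

lemma sg: "simple_graph Y E" using extE by blast
lemma EY: "E u v \<Longrightarrow> u \<in> Y" "E u v \<Longrightarrow> v \<in> Y" using sg unfolding simple_graph_def by blast+
lemma sym: "E u v \<Longrightarrow> E v u" using sg unfolding simple_graph_def by blast
lemma irr: "\<not> E u u" using sg unfolding simple_graph_def by blast
lemma finY: "finite Y" using sg unfolding simple_graph_def by blast
lemma sbar_eq: "sbar = 2 * (s - 1)" "s \<ge> 1"
proof -
  have "int 1 = 2 * int s - int sbar - 1" by (rule extE) 
  then show "sbar = 2 * (s - 1)" "s \<ge> 1" by auto
qed

lemma locall: "card Y1 = 2 * s \<and>
        card Y2 = 2 * sbar \<and>
        (\<forall>z \<in> Y1.
           card {w \<in> Y2. E z w} = sbar \<and>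
           card {w \<in> Y1. E z w} = 1) \<and>
        (\<forall>z \<in> Y2.
           card {w \<in> Y2. E z w} = s \<and>
           card {w \<in> Y1. E z w} = s)"
proof -
  have L: "\<forall>y \<in> Y.
        card (sphere1 Y E y) = 2 * s \<and>
        card (sphere2 Y E y) = 2 * sbar \<and>
        (\<forall>z \<in> sphere1 Y E y.
           card {w \<in> sphere2 Y E y. E z w} = sbar \<and>
           card {w \<in> sphere1 Y E y. E z w} = 1) \<and>
        (\<forall>z \<in> sphere2 Y E y.
           card {w \<in> sphere2 Y E y. E z w} = s \<and>
           card {w \<in> sphere1 Y E y. E z w} = s)" by (rule extE)
  show ?thesis using bspec[OF L yY] .
qed

lemma loc:
  "card Y1 = 2*s" "card Y2 = 2*sbar"
  "z \<in> Y1 \<Longrightarrow> card {w \<in> Y2. E z w} = sbar"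
  "z \<in> Y1 \<Longrightarrow> card {w \<in> Y1. E z w} = 1"
  "z \<in> Y2 \<Longrightarrow> card {w \<in> Y2. E z w} = s"
  "z \<in> Y2 \<Longrightarrow> card {w \<in> Y1. E z w} = s"
proof -
  note L = locall
  show "card Y1 = 2*s" using conjunct1[OF L] .
  show "card Y2 = 2*sbar" using conjunct1[OF conjunct2[OF L]] .
  note L1 = conjunct1[OF conjunct2[OF conjunct2[OF L]]]
  note L2 = conjunct2[OF conjunct2[OF conjunct2[OF L]]]
  show "z \<in> Y1 \<Longrightarrow> card {w \<in> Y2. E z w} = sbar" using conjunct1[OF bspec[OF L1]] .
  show "z \<in> Y1 \<Longrightarrow> card {w \<in> Y1. E z w} = 1" using conjunct2[OF bspec[OF L1]] .
  show "z \<in> Y2 \<Longrightarrow> card {w \<in> Y2. E z w} = s" using conjunct1[OF bspec[OF L2]] .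
  show "z \<in> Y2 \<Longrightarrow> card {w \<in> Y1. E z w} = s" using conjunct2[OF bspec[OF L2]] .
qed

lemma tri_card: assumes "E u v" shows "card {w \<in> Y. E u w \<and> E v w} = 1"
proof -
  have T: "\<forall>u \<in> Y. \<forall>v \<in> Y. E u v \<longrightarrow> card {w \<in> Y. E u w \<and> E v w} = 1" by (rule extE)
  show ?thesis using T EY assms by blast
qed

lemma tri_ex: assumes "E u v" shows "\<exists>w. E u w \<and> E v w"
proof -
  have "card {w \<in> Y. E u w \<and> E v w} = Suc 0" using tri_card[OF assms] by simp
  then obtain x where "{w \<in> Y. E u w \<and> E v w} = {x}" unfolding card_1_singleton_iff by blast
  then show ?thesis by blast
qed

lemma tri_uniq: assumes "E u v" "E u w" "E v w" "E u w'" "E v w'" shows "w = w'"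
proof -
  have "card {w \<in> Y. E u w \<and> E v w} = Suc 0" using tri_card[OF assms(1)] by simp
  then obtain x where x: "{w \<in> Y. E u w \<and> E v w} = {x}" unfolding card_1_singleton_iff by blast
  have "w \<in> {w \<in> Y. E u w \<and> E v w}" using EY(2)[OF assms(2)] assms by simp
  moreover have "w' \<in> {w \<in> Y. E u w \<and> E v w}" using EY(2)[OF assms(4)] assms by simp
  ultimately show ?thesis unfolding x by simp
qed

lemma Y1Y: "Y1 \<subseteq> Y" and Y2Y: "Y2 \<subseteq> Y" unfolding sphere1_def sphere2_def by auto
lemma finY1: "finite Y1" and finY2: "finite Y2" using Y1Y Y2Y finY finite_subset by auto
lemma disj12: "Y1 \<inter> Y2 = {}" unfolding sphere1_def sphere2_def by auto
lemma yn: "y \<notin> Y1" "y \<notin> Y2" unfolding sphere1_def sphere2_def using irr by auto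
lemma cover: assumes "z \<in> Y" shows "z = y \<or> z \<in> Y1 \<or> z \<in> Y2"
proof -
  have d: "\<forall>x\<in>Y. \<forall>z\<in>Y. x = z \<or> E x z \<or> (\<exists>w\<in>Y. E x w \<and> E w z)"
    using extE unfolding diameter2_def by blast
  then have "y = z \<or> E y z \<or> (\<exists>w\<in>Y. E y w \<and> E w z)" using yY assms by blast
  then show ?thesis using assms unfolding sphere1_def sphere2_def by auto
qed

lemma m1: "a \<in> Y1 \<Longrightarrow> \<exists>!b. b \<in> Y1 \<and> E a b"
proof -
  assume "a \<in> Y1"
  then have "card {w \<in> Y1. E a w} = Suc 0" using loc(4) by simp
  then obtain x where x: "{w \<in> Y1. E a w} = {x}" unfolding card_1_singleton_iff by blast
  show ?thesis
  proof (rule ex1I[of _ x])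
    show "x \<in> Y1 \<and> E a x" using x by blast
    show "b = x" if "b \<in> Y1 \<and> E a b" for b using x that by blast
  qed
qed

lemma Adisj: assumes "a \<in> Y1" "b \<in> Y1" "E a b" shows "AA a \<inter> AA b = {}"
proof (rule ccontr)
  assume "AA a \<inter> AA b \<noteq> {}"
  then obtain z where z: "z \<in> Y2" "E a z" "E b z" by blast
  have "E y a" "E y b" using assms unfolding sphere1_def by auto
  then have "E a y" "E b y" using sym by blast+
  then have "z = y" using tri_uniq[OF assms(3) z(2,3)] by blast
  then show False using z yn by blast
qed

lemma Aunion: assumes "a \<in> Y1" "b \<in> Y1" "E a b" shows "AA a \<union> AA b = Y2"
proof -
  have f: "finite (AA a)" "finite (AA b)" using finY2 by auto
  have "card (AA a \<union> AA b) = card (AA a) + card (AA b)" by (rule card_Un_disjoint[OF f Adisj[OF assms]])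
  also have "\<dots> = card Y2" using loc(2) loc(3)[OF assms(1)] loc(3)[OF assms(2)] by simp
  finally have c: "card (AA a \<union> AA b) = card Y2" .
  have sub: "AA a \<union> AA b \<subseteq> Y2" by blast
  show ?thesis by (rule card_subset_eq[OF finY2 sub c])
qed

lemma K: assumes "z \<in> Y2" "a \<in> Y1" "E z a" "E z w" "E a w" shows "w \<in> Y2"
proof -
  have "w \<in> Y" using EY assms by blast
  moreover have "w \<noteq> y" using assms(1,4) sym unfolding sphere2_def by blast
  moreover have "w \<notin> Y1"
  proof
    assume w: "w \<in> Y1"
    have "z \<in> AA a \<inter> AA w" using assms sym[of z a] sym[of z w] by auto
    then show False using Adisj[OF assms(2) w assms(5)] by blast
  qed
  ultimately show ?thesis using cover by blast
qed

lemma K2: assumes "z \<in> Y2" "w \<in> Y2" "E z w" shows "\<exists>a\<in>Y1. E z a \<and> E w a"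
proof -
  let ?N1 = "{a \<in> Y1. E z a}" and ?N2 = "{w \<in> Y2. E z w}"
  define f where "f a = (SOME w. E z w \<and> E a w)" for a
  have f: "E z (f a) \<and> E a (f a)" if "E z a" for a
    unfolding f_def using someI_ex[OF tri_ex[OF that]] .
  have fi: "f ` ?N1 \<subseteq> ?N2" using f K assms(1) by blast
  have inj: "inj_on f ?N1"
  proof (rule inj_onI)
    fix a a' assume "a \<in> ?N1" "a' \<in> ?N1" "f a = f a'"
    then show "a = a'" using f[of a] f[of a'] tri_uniq[of z "f a" a a'] sym[of a "f a"] sym[of a' "f a'"] by auto
  qed
  have "card (f ` ?N1) = card ?N2"
    using card_image[OF inj] loc(5,6)[OF assms(1)] by simp
  then have "f ` ?N1 = ?N2" using card_subset_eq[OF _ fi] finY2 by auto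
  then obtain a where "a \<in> ?N1" "w = f a" using assms by blast
  then show ?thesis using f[of a] sym by blast
qed

lemma commonY1: assumes "z \<in> Y2" "w \<in> Y2" "E z w" "E z c" "E w c" shows "c \<in> Y1"
  using K2[OF assms(1-3)] tri_uniq[OF assms(3)] assms(4,5) by blast

lemma notri: "\<not> (\<exists>u \<in> Y2. \<exists>v \<in> Y2. \<exists>w \<in> Y2. E u v \<and> E v w \<and> E u w)"
  using commonY1 sym disj12 by blast


end

context X begin

lemma nbA: assumes "a \<in> Y1" "w \<in> AA a" shows "\<exists>!w'. w' \<in> AA a \<and> E w w'"
proof -
  have aw: "E a w" using assms by simp
  obtain c where c: "E a c" "E w c" using tri_ex[OF aw] by auto
  have "c \<in> Y2" using K[of w a c] assms c sym[OF aw] by auto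
  hence ex: "c \<in> AA a \<and> E w c" using c by auto
  have uq: "c' = c" if "c' \<in> AA a" "E w c'" for c' using tri_uniq[of a w c' c] that c aw by auto
  show ?thesis by (rule ex1I[of _ c]) (use ex uq in auto)
qed

lemma part1: "is_partition (induced_edges E Y1) Y1 \<and> card (induced_edges E Y1) = s"
proof -
  have "is_partition (induced_edges E Y1) Y1 \<and> 2 * card (induced_edges E Y1) = card Y1"
    by (rule matching_partition[OF finY1 sym irr m1])
  then show ?thesis using loc(1) by auto
qed

lemma E2A: "{e \<in> induced_edges E Y2. e \<subseteq> AA a} = induced_edges E (AA a)"
  unfolding induced_edges_def by auto

lemma part4b: assumes "a \<in> Y1"
  shows "is_partition (induced_edges E (AA a)) (AA a) \<and> card (induced_edges E (AA a)) = s - 1"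
proof -
  have "finite (AA a)" using finY2 by simp
  then have "is_partition (induced_edges E (AA a)) (AA a) \<and> 2 * card (induced_edges E (AA a)) = card (AA a)"
    by (rule matching_partition[OF _ sym irr nbA[OF assms]])
  then show ?thesis using loc(3)[OF assms] sbar_eq by auto
qed

lemma part4a_ex: assumes "e \<in> induced_edges E Y2" shows "\<exists>a\<in>Y1. e \<subseteq> AA a"
proof -
  from assms obtain u v where e: "e = {u,v}" "u \<in> Y2" "v \<in> Y2" "E u v" unfolding induced_edges_def by blast
  then obtain a where "a \<in> Y1" "E u a" "E v a" using K2 by blast
  then show ?thesis using e sym[of u a] sym[of v a] by auto
qed

lemma part4a_uq: assumes "e \<in> induced_edges E Y2" "e \<subseteq> AA a" "e \<subseteq> AA b" shows "a = b"
proof -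
  from assms obtain u v where e: "e = {u,v}" "u \<in> Y2" "v \<in> Y2" "E u v" unfolding induced_edges_def by blast
  then show ?thesis using assms e tri_uniq[of u v a b] sym[of a u] sym[of a v] sym[of b u] sym[of b v] by auto
qed

lemma pig: assumes ab: "a \<in> Y1" "b \<in> Y1" "E a b" and u: "u \<in> AA a"
  and v: "v1 \<in> AA b" "v2 \<in> AA b" "E v1 v2" shows "E u v1 \<or> E u v2"
proof (rule ccontr)
  assume nc: "\<not> (E u v1 \<or> E u v2)"
  let ?Pb = "induced_edges E (AA b)"
  let ?N = "{w \<in> AA b. E u w}"
  let ?M = "{w \<in> AA a. E u w}"
  note P4 = part4b[OF ab(2)]
  have Pb1: "is_partition ?Pb (AA b)" using conjunct1[OF P4] .
  have Pb2: "card ?Pb = s - 1" using conjunct2[OF P4] .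
  have uY2: "u \<in> Y2" using u by blast
  have split: "{w\<in>Y2. E u w} = ?M \<union> ?N" using Aunion[OF ab] by blast
  from nbA[OF ab(1) u] obtain w' where w': "w' \<in> AA a \<and> E u w'" "\<forall>y. y \<in> AA a \<and> E u y \<longrightarrow> y = w'"
    by (rule ex1E)
  have "?M = {w'}" using w' by blast
  then have c1: "card ?M = 1" by simp
  have dj: "?M \<inter> ?N = {}" using Adisj[OF ab] by blast
  have finN: "finite ?N" by (rule finite_subset[OF _ finY2]) blast
  have finM: "finite ?M" by (rule finite_subset[OF _ finY2]) blast
  have "card {w\<in>Y2. E u w} = card ?M + card ?N"
    unfolding split by (rule card_Un_disjoint[OF finM finN dj])
  then have cN: "card ?N = s - 1" using loc(5)[OF uY2] c1 by simp
  let ?e0 = "{v1,v2}"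
  have e0: "?e0 \<in> ?Pb" unfolding induced_edges_def using v by blast
  have finPb: "finite ?Pb"
  proof (rule finite_subset[of _ "Pow (AA b)"])
    show "?Pb \<subseteq> Pow (AA b)" unfolding induced_edges_def by blast
    show "finite (Pow (AA b))" using finY2 by simp
  qed
  have cD: "card (?Pb - {?e0}) = s - 2" using card_Diff_singleton[OF e0] Pb2 by simp
  have "card ?Pb \<noteq> 0" using e0 finPb by auto
  then have s2: "s \<ge> 2" using Pb2 by simp
  have cov: "?N = (\<Union>e\<in>?Pb - {?e0}. ?N \<inter> e)"
  proof
    show "?N \<subseteq> (\<Union>e\<in>?Pb - {?e0}. ?N \<inter> e)"
    proof
      fix w assume w: "w \<in> ?N"
      then have "w \<in> AA b" by blast
      then have "w \<in> \<Union>?Pb" using Pb1 unfolding is_partition_def by blast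
      then obtain e where e: "e \<in> ?Pb" "w \<in> e" by blast
      have "w \<noteq> v1" "w \<noteq> v2" using w nc by auto
      then have "e \<noteq> ?e0" using e by auto
      then show "w \<in> (\<Union>e\<in>?Pb - {?e0}. ?N \<inter> e)" using e w by blast
    qed
    show "(\<Union>e\<in>?Pb - {?e0}. ?N \<inter> e) \<subseteq> ?N" by blast
  qed
  have le1: "card (?N \<inter> e) \<le> 1" if "e \<in> ?Pb" for e
  proof -
    from that obtain p q where e: "e = {p,q}" "p \<in> AA b" "q \<in> AA b" "E p q" unfolding induced_edges_def by blast
    have "p \<in> Y2" "q \<in> Y2" using e by blast+
    then have "\<not> (E u p \<and> E u q)" using notri uY2 e(4) by blast
    then have "?N \<inter> e \<subseteq> {p} \<or> ?N \<inter> e \<subseteq> {q}" using e(1) by blast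
    then show ?thesis
    proof
      assume "?N \<inter> e \<subseteq> {p}" then have "card (?N \<inter> e) \<le> card {p}" by (rule card_mono[rotated]) simp
      then show ?thesis by simp
    next
      assume "?N \<inter> e \<subseteq> {q}" then have "card (?N \<inter> e) \<le> card {q}" by (rule card_mono[rotated]) simp
      then show ?thesis by simp
    qed
  qed
  have finD: "finite (?Pb - {?e0})" using finPb by blast
  have "card ?N \<le> (\<Sum>e\<in>?Pb - {?e0}. card (?N \<inter> e))"
    by (subst cov) (rule card_UN_le[OF finD])
  also have "\<dots> \<le> (\<Sum>e\<in>?Pb - {?e0}. 1)" by (rule sum_mono) (use le1 in blast)
  also have "\<dots> = s - 2" using cD by simp
  finally show False using cN s2 by simp
qed




lemma inE2D: assumes "{p,q} \<in> induced_edges E S" shows "E p q"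
proof -
  from assms obtain u v where uv: "{p,q} = {u,v}" "E u v" unfolding induced_edges_def by blast
  then have "(p = u \<and> q = v) \<or> (p = v \<and> q = u)" by (simp add: doubleton_eq_iff)
  then show ?thesis using uv(2) sym by blast
qed

lemma inE2I: assumes "p \<in> S" "q \<in> S" "E p q" shows "{p,q} \<in> induced_edges E S"
  unfolding induced_edges_def using assms by blast

lemma gamma:
  assumes ab: "a \<in> Y1" "b \<in> Y1" "E a b"
    and al: "\<alpha>1 \<in> induced_edges E Y2" "\<alpha>2 \<in> induced_edges E Y2" "\<alpha>1 \<subseteq> AA a" "\<alpha>2 \<subseteq> AA b"
    and u: "\<alpha>1 = {u1,u2}" "u1 \<in> AA a" "u2 \<in> AA a"
    and x: "x1 \<in> AA b" "x2 \<in> AA b" "\<alpha>2 = {x1,x2}" "E u1 x1" "E u2 x2"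
    and B: "B = {{u1,x1},{u2,x2}}"
  shows "\<exists>!\<gamma>. \<gamma> \<in> induced_edges E Y1 \<and> (\<exists>c d \<beta>1 \<beta>2. \<gamma> = {c, d} \<and> B = {\<beta>1, \<beta>2} \<and> \<beta>1 \<subseteq> AA c \<and> \<beta>2 \<subseteq> AA d)"
proof -
  have dAB: "AA a \<inter> AA b = {}" by (rule Adisj[OF ab])
  have Y2s: "u1 \<in> Y2" "u2 \<in> Y2" "x1 \<in> Y2" "x2 \<in> Y2" using u x by blast+
  have b1E: "{u1,x1} \<in> induced_edges E Y2" by (rule inE2I[OF Y2s(1) Y2s(3) x(4)])
  have b2E: "{u2,x2} \<in> induced_edges E Y2" by (rule inE2I[OF Y2s(2) Y2s(4) x(5)])
  obtain c where c: "c \<in> Y1" "{u1,x1} \<subseteq> AA c" using part4a_ex[OF b1E] by blast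
  obtain c' where c': "c' \<in> Y1" "E c c'" using m1[OF c(1)] by blast
  have "u2 \<notin> AA c"
  proof
    assume h: "u2 \<in> AA c"
    then have "\<alpha>1 \<subseteq> AA c" using u(1) c(2) by blast
    then have "c = a" using part4a_uq[OF al(1) _ al(3)] by blast
    then show False using c(2) x(1) dAB by blast
  qed
  then have u2c: "u2 \<in> AA c'" using Aunion[OF c(1) c'(1) c'(2)] Y2s(2) by blast
  have "x2 \<notin> AA c"
  proof
    assume h: "x2 \<in> AA c"
    then have "\<alpha>2 \<subseteq> AA c" using x(3) c(2) by blast
    then have "c = b" using part4a_uq[OF al(2) _ al(4)] by blast
    then show False using c(2) u(2) dAB by blast
  qed
  then have x2c: "x2 \<in> AA c'" using Aunion[OF c(1) c'(1) c'(2)] Y2s(4) by blast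
  have b2c: "{u2,x2} \<subseteq> AA c'" using u2c x2c by blast
  have gE: "{c,c'} \<in> induced_edges E Y1" by (rule inE2I[OF c(1) c'(1) c'(2)])
  have P1: "is_partition (induced_edges E Y1) Y1" using part1 by blast
  show ?thesis
  proof (rule ex1I[of _ "{c,c'}"])
    show "{c,c'} \<in> induced_edges E Y1 \<and> (\<exists>c0 d \<beta>1 \<beta>2. {c,c'} = {c0, d} \<and> B = {\<beta>1, \<beta>2} \<and> \<beta>1 \<subseteq> AA c0 \<and> \<beta>2 \<subseteq> AA d)"
      using gE B c(2) b2c by blast
  next
    fix g assume g: "g \<in> induced_edges E Y1 \<and> (\<exists>c0 d \<beta>1 \<beta>2. g = {c0, d} \<and> B = {\<beta>1, \<beta>2} \<and> \<beta>1 \<subseteq> AA c0 \<and> \<beta>2 \<subseteq> AA d)"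
    then obtain c2 d2 \<beta>1 \<beta>2 where g2: "g = {c2,d2}" "B = {\<beta>1,\<beta>2}" "\<beta>1 \<subseteq> AA c2" by (elim conjE exE)
    have "\<beta>1 \<in> B" using g2(2) by simp
    then have "\<beta>1 = {u1,x1} \<or> \<beta>1 = {u2,x2}" unfolding B by simp
    then have "c2 = c \<or> c2 = c'"
    proof
      assume "\<beta>1 = {u1,x1}"
      then have "c = c2" using part4a_uq[OF b1E c(2)] g2(3) by simp
      then show ?thesis by simp
    next
      assume "\<beta>1 = {u2,x2}"
      then have "c' = c2" using part4a_uq[OF b2E b2c] g2(3) by simp
      then show ?thesis by simp
    qed
    then have cin: "c2 \<in> g" "c2 \<in> {c,c'}" using g2(1) by auto
    have dj: "\<forall>e\<in>induced_edges E Y1. \<forall>f\<in>induced_edges E Y1. e \<noteq> f \<longrightarrow> e \<inter> f = {}"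
      using P1 unfolding is_partition_def by (elim conjE)
    have gE1: "g \<in> induced_edges E Y1" using g by (rule conjunct1)
    show "g = {c,c'}"
    proof (rule ccontr)
      assume ne: "g \<noteq> {c,c'}"
      have "g \<inter> {c,c'} = {}" by (rule dj[rule_format, OF gE1 gE ne])
      moreover have "c2 \<in> g \<inter> {c,c'}" using cin by (rule IntI)
      ultimately show False by simp
    qed
  qed
qed

lemma part5:
  assumes ab: "a \<in> Y1" "b \<in> Y1" "E a b"
    and al: "\<alpha>1 \<in> induced_edges E Y2" "\<alpha>2 \<in> induced_edges E Y2" "\<alpha>1 \<subseteq> AA a" "\<alpha>2 \<subseteq> AA b"
  shows "(\<exists>!B. B \<subseteq> induced_edges E Y2 \<and> card B = 2 \<and> is_square ({\<alpha>1, \<alpha>2} \<union> B))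
          \<and> (\<forall>B. B \<subseteq> induced_edges E Y2 \<and> card B = 2 \<and> is_square ({\<alpha>1, \<alpha>2} \<union> B) \<longrightarrow>
               (\<exists>!\<gamma>. \<gamma> \<in> induced_edges E Y1 \<and> (\<exists>c d \<beta>1 \<beta>2. \<gamma> = {c, d} \<and> B = {\<beta>1, \<beta>2}
                                     \<and> \<beta>1 \<subseteq> AA c \<and> \<beta>2 \<subseteq> AA d)))"
proof -
  obtain u1 u2 where u: "\<alpha>1 = {u1,u2}" "u1 \<in> Y2" "u2 \<in> Y2" "E u1 u2" using al(1) unfolding induced_edges_def by blast
  obtain v1 v2 where v: "\<alpha>2 = {v1,v2}" "v1 \<in> Y2" "v2 \<in> Y2" "E v1 v2" using al(2) unfolding induced_edges_def by blast
  have uA: "u1 \<in> AA a" "u2 \<in> AA a" using al(3) u(1) by auto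
  have vA: "v1 \<in> AA b" "v2 \<in> AA b" using al(4) v(1) by auto
  have dAB: "AA a \<inter> AA b = {}" by (rule Adisj[OF ab])
  have d: "u1 \<noteq> u2" "v1 \<noteq> v2" "u1 \<noteq> v1" "u1 \<noteq> v2" "u2 \<noteq> v1" "u2 \<noteq> v2"
    using irr u(4) v(4) uA vA dAB by blast+
  have p1: "E u1 v1 \<or> E u1 v2" by (rule pig[OF ab uA(1) vA v(4)])
  have p2: "E u2 v1 \<or> E u2 v2" by (rule pig[OF ab uA(2) vA v(4)])
  have tri: "False" if "p \<in> Y2" "q \<in> Y2" "r \<in> Y2" "E p q" "E q r" "E p r" for p q r
    using notri that by blast
  have x1: "\<not> (E u1 v1 \<and> E u1 v2)" using tri[of u1 v1 v2] u v by blast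
  have x2: "\<not> (E u2 v1 \<and> E u2 v2)" using tri[of u2 v1 v2] u v by blast
  have x3: "\<not> (E u1 v1 \<and> E u2 v1)" using tri[of u1 u2 v1] u v by blast
  have x4: "\<not> (E u1 v2 \<and> E u2 v2)" using tri[of u1 u2 v2] u v by blast
  define c1 where "c1 = (E u1 v1 \<and> E u2 v2)"
  define c2 where "c2 = (E u1 v2 \<and> E u2 v1)"
  define M1 where "M1 = {{u1,v1},{u2,v2}}"
  define M2 where "M2 = {{u1,v2},{u2,v1}}"
  have c12: "(c1 \<and> \<not> c2) \<or> (c2 \<and> \<not> c1)" using p1 p2 x1 x2 x3 x4 unfolding c1_def c2_def by blast
  let ?E2 = "induced_edges E Y2"
  let ?P = "\<lambda>B. B \<subseteq> ?E2 \<and> card B = 2 \<and> is_square ({\<alpha>1, \<alpha>2} \<union> B)"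
  have QU: "{\<alpha>1, \<alpha>2} \<union> B = {{u1,u2},{v1,v2}} \<union> B" for B using u(1) v(1) by simp
  have fwd: "(B = M1 \<and> c1) \<or> (B = M2 \<and> c2)" if "?P B" for B
  proof -
    have sq: "is_square ({{u1,u2},{v1,v2}} \<union> B)" using that QU by simp
    have cB: "card B = 2" using that by blast
    have "B = M1 \<or> B = M2" using sq_char[OF d cB sq] unfolding M1_def M2_def .
    then show ?thesis
    proof
      assume h: "B = M1"
      then have "{u1,v1} \<in> ?E2" "{u2,v2} \<in> ?E2" using that unfolding M1_def by blast+
      then have c1 unfolding c1_def using inE2D by blast
      then show ?thesis using h by blast
    next
      assume h: "B = M2"
      then have "{u1,v2} \<in> ?E2" "{u2,v1} \<in> ?E2" using that unfolding M2_def by blast+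
      then have c2 unfolding c2_def using inE2D by blast
      then show ?thesis using h by blast
    qed
  qed
  have bwd1: "?P M1" if c1
  proof -
    have "M1 \<subseteq> ?E2" unfolding M1_def using inE2I u v that unfolding c1_def by blast
    moreover have "card M1 = 2" unfolding M1_def using d by (simp add: doubleton_eq_iff)
    moreover have "{\<alpha>1, \<alpha>2} \<union> M1 = {{u1,u2},{v1,v2},{u1,v1},{u2,v2}}" unfolding M1_def u(1) v(1) by blast
    ultimately show ?thesis using sq_of[OF d] by simp
  qed
  have bwd2: "?P M2" if c2
  proof -
    have "M2 \<subseteq> ?E2" unfolding M2_def using inE2I u v that unfolding c2_def by blast
    moreover have "card M2 = 2" unfolding M2_def using d by (simp add: doubleton_eq_iff)
    moreover have "{\<alpha>1, \<alpha>2} \<union> M2 = {{u1,u2},{v2,v1},{u1,v2},{u2,v1}}" unfolding M2_def u(1) v(1) by blast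
    moreover have "is_square {{u1,u2},{v2,v1},{u1,v2},{u2,v1}}"
      by (rule sq_of) (use d in auto)
    ultimately show ?thesis by simp
  qed
  have part_a: "\<exists>!B. ?P B"
    using c12
  proof
    assume h: "c1 \<and> \<not> c2"
    show ?thesis
    proof (rule ex1I[of _ M1])
      show "?P M1" using bwd1 h by blast
      show "B = M1" if "?P B" for B using fwd[OF that] h by blast
    qed
  next
    assume h: "c2 \<and> \<not> c1"
    show ?thesis
    proof (rule ex1I[of _ M2])
      show "?P M2" using bwd2 h by blast
      show "B = M2" if "?P B" for B using fwd[OF that] h by blast
    qed
  qed
  have part_b: "\<exists>!\<gamma>. \<gamma> \<in> induced_edges E Y1 \<and> (\<exists>c d \<beta>1 \<beta>2. \<gamma> = {c, d} \<and> B = {\<beta>1, \<beta>2}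
                                     \<and> \<beta>1 \<subseteq> AA c \<and> \<beta>2 \<subseteq> AA d)" if "?P B" for B
    using fwd[OF that]
  proof
    assume h: "B = M1 \<and> c1"
    have "E u1 v1" "E u2 v2" "B = {{u1,v1},{u2,v2}}" using h unfolding c1_def M1_def by blast+
    then show ?thesis by (rule gamma[OF ab al u(1) uA vA v(1)])
  next
    assume h: "B = M2 \<and> c2"
    have "\<alpha>2 = {v2,v1}" using v(1) by blast
    have "E u1 v2" "E u2 v1" "B = {{u1,v2},{u2,v1}}" using h unfolding c2_def M2_def by blast+
    then show ?thesis by (rule gamma[OF ab al u(1) uA vA(2) vA(1) \<open>\<alpha>2 = {v2,v1}\<close>])
  qed
  show ?thesis
  proof (intro conjI allI impI)
    show "\<exists>!B. ?P B" by (rule part_a)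
    fix B assume "?P B" then show "\<exists>!\<gamma>. \<gamma> \<in> induced_edges E Y1 \<and> (\<exists>c d \<beta>1 \<beta>2. \<gamma> = {c, d} \<and> B = {\<beta>1, \<beta>2}
                                     \<and> \<beta>1 \<subseteq> AA c \<and> \<beta>2 \<subseteq> AA d)" by (rule part_b)
  qed
qed



lemma main:
  "(is_partition (induced_edges E Y1) Y1 \<and> card (induced_edges E Y1) = s)
     \<and> (\<forall>a \<in> Y1. \<forall>b \<in> Y1. E a b \<longrightarrow>
          AA a \<union> AA b = Y2 \<and> AA a \<inter> AA b = {} \<and>
          card (AA a) = sbar \<and> card (AA b) = sbar \<and> sbar = 2 * (s - 1))
     \<and> \<not> (\<exists>u \<in> Y2. \<exists>v \<in> Y2. \<exists>w \<in> Y2. E u v \<and> E v w \<and> E u w)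
     \<and> (\<forall>e \<in> induced_edges E Y2. \<exists>!a. a \<in> Y1 \<and> e \<subseteq> AA a)
     \<and> (\<forall>a \<in> Y1. is_partition {e \<in> induced_edges E Y2. e \<subseteq> AA a} (AA a)
                 \<and> card {e \<in> induced_edges E Y2. e \<subseteq> AA a} = s - 1)
     \<and> (\<forall>a \<in> Y1. \<forall>b \<in> Y1. \<forall>\<alpha>1 \<in> induced_edges E Y2. \<forall>\<alpha>2 \<in> induced_edges E Y2.
          E a b \<and> \<alpha>1 \<subseteq> AA a \<and> \<alpha>2 \<subseteq> AA b \<longrightarrow>
          (\<exists>!B. B \<subseteq> induced_edges E Y2 \<and> card B = 2 \<and> is_square ({\<alpha>1, \<alpha>2} \<union> B))
          \<and> (\<forall>B. B \<subseteq> induced_edges E Y2 \<and> card B = 2 \<and> is_square ({\<alpha>1, \<alpha>2} \<union> B) \<longrightarrow>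
               (\<exists>!\<gamma>. \<gamma> \<in> induced_edges E Y1 \<and> (\<exists>c d \<beta>1 \<beta>2. \<gamma> = {c, d} \<and> B = {\<beta>1, \<beta>2}
                                     \<and> \<beta>1 \<subseteq> AA c \<and> \<beta>2 \<subseteq> AA d))))"
proof (intro conjI ballI impI)
  show "is_partition (induced_edges E Y1) Y1" using part1 by (rule conjunct1)
  show "card (induced_edges E Y1) = s" using part1 by (rule conjunct2)
  show "\<not> (\<exists>u \<in> Y2. \<exists>v \<in> Y2. \<exists>w \<in> Y2. E u v \<and> E v w \<and> E u w)" by (rule notri)
next
  fix a b assume ab: "a \<in> Y1" "b \<in> Y1" "E a b"
  show "AA a \<union> AA b = Y2" by (rule Aunion[OF ab])
  show "AA a \<inter> AA b = {}" by (rule Adisj[OF ab])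
  show "card (AA a) = sbar" by (rule loc(3)[OF ab(1)])
  show "card (AA b) = sbar" by (rule loc(3)[OF ab(2)])
  show "sbar = 2 * (s - 1)" by (rule sbar_eq(1))
next
  fix e assume e: "e \<in> induced_edges E Y2"
  obtain a where a: "a \<in> Y1" "e \<subseteq> AA a" using part4a_ex[OF e] by blast
  show "\<exists>!a. a \<in> Y1 \<and> e \<subseteq> AA a"
  proof (rule ex1I[of _ a])
    show "a \<in> Y1 \<and> e \<subseteq> AA a" using a by (rule conjI)
    show "b = a" if "b \<in> Y1 \<and> e \<subseteq> AA b" for b using part4a_uq[OF e _ a(2)] that by blast
  qed
next
  fix a assume a: "a \<in> Y1"
  show "is_partition {e \<in> induced_edges E Y2. e \<subseteq> AA a} (AA a)"
    unfolding E2A using part4b[OF a] by (rule conjunct1)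
  show "card {e \<in> induced_edges E Y2. e \<subseteq> AA a} = s - 1"
    unfolding E2A using part4b[OF a] by (rule conjunct2)
next
  fix a b \<alpha>1 \<alpha>2 assume ab: "a \<in> Y1" "b \<in> Y1" and al: "\<alpha>1 \<in> induced_edges E Y2" "\<alpha>2 \<in> induced_edges E Y2"
    and h: "E a b \<and> \<alpha>1 \<subseteq> AA a \<and> \<alpha>2 \<subseteq> AA b"
  have h': "E a b" "\<alpha>1 \<subseteq> AA a" "\<alpha>2 \<subseteq> AA b" using h by blast+
  note P = part5[OF ab h'(1) al h'(2,3)]
  show "\<exists>!B. B \<subseteq> induced_edges E Y2 \<and> card B = 2 \<and> is_square ({\<alpha>1, \<alpha>2} \<union> B)"
    using P by (rule conjunct1)
  show "\<forall>B. B \<subseteq> induced_edges E Y2 \<and> card B = 2 \<and> is_square ({\<alpha>1, \<alpha>2} \<union> B) \<longrightarrow>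
               (\<exists>!\<gamma>. \<gamma> \<in> induced_edges E Y1 \<and> (\<exists>c d \<beta>1 \<beta>2. \<gamma> = {c, d} \<and> B = {\<beta>1, \<beta>2}
                                     \<and> \<beta>1 \<subseteq> AA c \<and> \<beta>2 \<subseteq> AA d))"
    using P by (rule conjunct2)
qed

end

theorem proposition7:
  fixes Y :: "'a set" and E :: "'a \<Rightarrow> 'a \<Rightarrow> bool" and t s sbar :: nat and y :: 'a
  assumes ext: "extensible Y E t s sbar"
    and t1: "t = 1"
    and yY: "y \<in> Y"
  defines "Y1 \<equiv> sphere1 Y E y"
    and "Y2 \<equiv> sphere2 Y E y"
    and "E1 \<equiv> induced_edges E (sphere1 Y E y)"
    and "E2 \<equiv> induced_edges E (sphere2 Y E y)"
    and "A \<equiv> (\<lambda>a. {z \<in> sphere2 Y E y. E a z})"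
  shows
    \<comment> \<open>(1)\<close>
    "(is_partition E1 Y1 \<and> card E1 = s)
     \<comment> \<open>(2)\<close>
     \<and> (\<forall>a \<in> Y1. \<forall>b \<in> Y1. E a b \<longrightarrow>
          A a \<union> A b = Y2 \<and> A a \<inter> A b = {} \<and>
          card (A a) = sbar \<and> card (A b) = sbar \<and> sbar = 2 * (s - 1))
     \<comment> \<open>(3)\<close>
     \<and> \<not> (\<exists>u \<in> Y2. \<exists>v \<in> Y2. \<exists>w \<in> Y2. E u v \<and> E v w \<and> E u w)
     \<comment> \<open>(4)\<close>
     \<and> (\<forall>e \<in> E2. \<exists>!a. a \<in> Y1 \<and> e \<subseteq> A a)
     \<and> (\<forall>a \<in> Y1. is_partition {e \<in> E2. e \<subseteq> A a} (A a)
                 \<and> card {e \<in> E2. e \<subseteq> A a} = s - 1)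
     \<comment> \<open>(5)\<close>
     \<and> (\<forall>a \<in> Y1. \<forall>b \<in> Y1. \<forall>\<alpha>1 \<in> E2. \<forall>\<alpha>2 \<in> E2.
          E a b \<and> \<alpha>1 \<subseteq> A a \<and> \<alpha>2 \<subseteq> A b \<longrightarrow>
          (\<exists>!B. B \<subseteq> E2 \<and> card B = 2 \<and> is_square ({\<alpha>1, \<alpha>2} \<union> B))
          \<and> (\<forall>B. B \<subseteq> E2 \<and> card B = 2 \<and> is_square ({\<alpha>1, \<alpha>2} \<union> B) \<longrightarrow>
               (\<exists>!\<gamma>. \<gamma> \<in> E1 \<and> (\<exists>c d \<beta>1 \<beta>2. \<gamma> = {c, d} \<and> B = {\<beta>1, \<beta>2}
                                     \<and> \<beta>1 \<subseteq> A c \<and> \<beta>2 \<subseteq> A d))))"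
proof -
  have X: "X Y E s sbar y" unfolding X_def using ext t1 yY by simp
  show ?thesis unfolding Y1_def Y2_def E1_def E2_def A_def by (rule X.main[OF X])
qed

end
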